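(* Let $(M,g)$ be a Riemannian manifold of dimension $n$, with $\mathcal{T}M$, $V$, $G$, $\xi_1,\xi_2$, $\omega^1,\omega^2$, $f$ as in the context (on the open set where $F^2+K^2>0$). Let $V_{\xi_2}=\{X\in V:\ \omega^2(X)=0\}$, $\overline{G}=G|_{V_{\xi_2}}$, $\overline{f}=f|_{V_{\xi_2}}$ (an endomorphism of $V_{\xi_2}$) and $\overline{\eta}=\omega^1|_{V_{\xi_2}}$. Then for all sections $X,Y$ of $V_{\xi_2}$, $$\overline{G}(\overline{f}(X),\overline{f}(Y))=\overline{G}(X,Y)-\overline{\eta}(X)\overline{\eta}(Y).$$
   Context: Let $M$ be an $n$-dimensional smooth manifold with a Riemannian metric $g=(g_{ij})$, with inverse matrix $(g^{ij})$; summation convention is used. The big-tangent manifold $\mathcal{T}M$ is the total space of $TM\oplus T^*M\to M$; over a chart $(U,(x^i))$ it has coordinates $(x^i,y^i,p_i)$, the point being $y^i\frac{\partial}{\partial x^i}|_x+p_i\,dx^i|_x$. The vertical bundle $V\subset T\mathcal{T}M$ is tangent to the fibres of $\mathcal{T}M\to M$, locally spanned by $\{\frac{\partial}{\partial y^i},\frac{\partial}{\partial p_i}\}$. Put $y_i=g_{ij}y^j$, $p^i=g^{ij}p_j$, $F^2=g_{ij}y^iy^j$, $K^2=g^{ij}p_ip_j$; all objects are considered where $F^2+K^2>0$. $G$ is the metric on $V$ with $G(\frac{\partial}{\partial y^i},\frac{\partial}{\partial y^j})=g_{ij}$, $G(\frac{\partial}{\partial p_i},\frac{\partial}{\partial p_j})=g^{ij}$,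 $G(\frac{\partial}{\partial y^i},\frac{\partial}{\partial p_j})=0$. $\phi:V\to V$ is given by $\phi(\frac{\partial}{\partial y^i})=-g_{ij}\frac{\partial}{\partial p_j}$, $\phi(\frac{\partial}{\partial p_i})=g^{ij}\frac{\partial}{\partial y^j}$. $\xi_2=\frac{1}{\sqrt{F^2+K^2}}(y^i\frac{\partial}{\partial y^i}+p_i\frac{\partial}{\partial p_i})$, $\xi_1=\frac{1}{\sqrt{F^2+K^2}}(p^i\frac{\partial}{\partial y^i}-y_i\frac{\partial}{\partial p_i})$. $\omega^1,\omega^2\in\Gamma(V^* )$: $\omega^1(\frac{\partial}{\partial y^i})=\frac{p_i}{\sqrt{F^2+K^2}}$, $\omega^1(\frac{\partial}{\partial p_i})=-\frac{y^i}{\sqrt{F^2+K^2}}$, $\omega^2(\frac{\partial}{\partial y^i})=\frac{y_i}{\sqrt{F^2+K^2}}$, $\omega^2(\frac{\partial}{\partial p_i})=\frac{p^i}{\sqrt{F^2+K^2}}$. $f:V\to V$, $f(X)=\phi(X)-\omega^2(X)\xi_1+\omega^1(X)\xi_2$. *)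

theory Defs
  imports "HOL-Analysis.Analysis"
begin

text \<open>Pointwise (fibrewise) model.  At a point (x^i, y^i, p_i) of the big-tangent
manifold, the Riemannian metric at x is the symmetric positive definite matrix
g = (g_ij) :: real^'n^'n, its inverse (g^ij) is matrix_inv g.  A vertical vector
X = a^i d/dy^i + b_i d/dp_i is represented by the pair (a, b).\<close>

type_synonym 'n vvec = "(real^'n) \<times> (real^'n)"

definition riem_metric :: "real^'n^'n \<Rightarrow> bool" where
  "riem_metric g \<longleftrightarrow> transpose g = g \<and> (\<forall>v. v \<noteq> 0 \<longrightarrow> v \<bullet> (g *v v) > 0)"

definition Fsq :: "real^'n^'n \<Rightarrow> real^'n \<Rightarrow> real" where
  "Fsq g y = y \<bullet> (g *v y)"

definition Ksq :: "real^'n^'n \<Rightarrow> real^'n \<Rightarrow> real" where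
  "Ksq g p = p \<bullet> (matrix_inv g *v p)"

definition nrm :: "real^'n^'n \<Rightarrow> real^'n \<Rightarrow> real^'n \<Rightarrow> real" where
  "nrm g y p = sqrt (Fsq g y + Ksq g p)"

definition Gv :: "real^'n^'n \<Rightarrow> 'n vvec \<Rightarrow> 'n vvec \<Rightarrow> real" where
  "Gv g X Y = fst X \<bullet> (g *v fst Y) + snd X \<bullet> (matrix_inv g *v snd Y)"

definition phiv :: "real^'n^'n \<Rightarrow> 'n vvec \<Rightarrow> 'n vvec" where
  "phiv g X = (matrix_inv g *v snd X, - (g *v fst X))"

definition xi2 :: "real^'n^'n \<Rightarrow> real^'n \<Rightarrow> real^'n \<Rightarrow> 'n vvec" where
  "xi2 g y p = ((1 / nrm g y p) *\<^sub>R y, (1 / nrm g y p) *\<^sub>R p)"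

definition xi1 :: "real^'n^'n \<Rightarrow> real^'n \<Rightarrow> real^'n \<Rightarrow> 'n vvec" where
  "xi1 g y p = ((1 / nrm g y p) *\<^sub>R (matrix_inv g *v p), (1 / nrm g y p) *\<^sub>R (- (g *v y)))"

definition omega1 :: "real^'n^'n \<Rightarrow> real^'n \<Rightarrow> real^'n \<Rightarrow> 'n vvec \<Rightarrow> real" where
  "omega1 g y p X = (p \<bullet> fst X - y \<bullet> snd X) / nrm g y p"

definition omega2 :: "real^'n^'n \<Rightarrow> real^'n \<Rightarrow> real^'n \<Rightarrow> 'n vvec \<Rightarrow> real" where
  "omega2 g y p X = ((g *v y) \<bullet> fst X + (matrix_inv g *v p) \<bullet> snd X) / nrm g y p"

definition fv :: "real^'n^'n \<Rightarrow> real^'n \<Rightarrow> real^'n \<Rightarrow> 'n vvec \<Rightarrow> 'n vvec" where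
  "fv g y p X = phiv g X - omega2 g y p X *\<^sub>R xi1 g y p + omega1 g y p X *\<^sub>R xi2 g y p"

definition V_xi2 :: "real^'n^'n \<Rightarrow> real^'n \<Rightarrow> real^'n \<Rightarrow> 'n vvec set" where
  "V_xi2 g y p = {X. omega2 g y p X = 0}"

end

theory Submission
  imports Defs
begin

lemma inner_mat_sym:
  fixes M :: "real^'n^'n"
  assumes "transpose M = M"
  shows "(M *v u) \<bullet> v = u \<bullet> (M *v v)"
proof -
  have "(M *v u) \<bullet> v = (u v* transpose M) \<bullet> v" by simp
  also have "\<dots> = u \<bullet> (transpose M *v v)" by (rule dot_lmul_matrix)
  finally show ?thesis using assms by simp
qed

lemma mvm_minus: fixes A :: "real^'n^'m" shows "A *v (- x) = - (A *v x)"
  using matrix_vector_mult_scaleR[of A "-1" x] by simp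

lemma inv_facts:
  fixes g :: "real^'n^'n"
  assumes "riem_metric g"
  shows "g ** matrix_inv g = mat 1" "matrix_inv g ** g = mat 1"
        "transpose (matrix_inv g) = matrix_inv g" "transpose g = g"
proof -
  have ker: "\<forall>x. g *v x = 0 \<longrightarrow> x = 0"
  proof (intro allI impI)
    fix x assume "g *v x = 0"
    thus "x = 0" using assms unfolding riem_metric_def by (metis inner_zero_right less_irrefl)
  qed
  hence "invertible g" using matrix_left_invertible_ker invertible_left_inverse by blast
  then obtain A where "g ** A = mat 1 \<and> A ** g = mat 1" unfolding invertible_def by blast
  hence h: "g ** matrix_inv g = mat 1 \<and> matrix_inv g ** g = mat 1"
    unfolding matrix_inv_def by (rule someI)
  thus 1: "g ** matrix_inv g = mat 1" and 2: "matrix_inv g ** g = mat 1" by auto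
  show gs: "transpose g = g" using assms unfolding riem_metric_def by simp
  have "transpose (matrix_inv g) ** g = mat 1"
    by (metis 1 gs matrix_transpose_mul transpose_mat)
  hence "transpose (matrix_inv g) = transpose (matrix_inv g) ** (g ** matrix_inv g)"
    using 1 by simp
  also have "\<dots> = matrix_inv g"
    by (metis \<open>transpose (matrix_inv g) ** g = mat 1\<close> matrix_mul_assoc matrix_mul_lid)
  finally show "transpose (matrix_inv g) = matrix_inv g" .
qed

theorem theorem5p5:
  fixes g :: "real^'n^'n" and y p :: "real^'n" and X Y :: "'n vvec"
  assumes "riem_metric g"
    and "Fsq g y + Ksq g p > 0"
    and "X \<in> V_xi2 g y p" and "Y \<in> V_xi2 g y p"
  shows "fv g y p X \<in> V_xi2 g y p \<and>
         Gv g (fv g y p X) (fv g y p Y) = Gv g X Y - omega1 g y p X * omega1 g y p Y"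
proof -
  define h where "h = matrix_inv g"
  define S where "S = nrm g y p"
  note I = inv_facts[OF assms(1), folded h_def]
  have gh: "g *v (h *v v) = v" for v by (simp add: matrix_vector_mul_assoc I)
  have hg: "h *v (g *v v) = v" for v by (simp add: matrix_vector_mul_assoc I)
  have sg: "(g *v u) \<bullet> v = u \<bullet> (g *v v)" for u v by (rule inner_mat_sym[OF I(4)])
  have sh: "(h *v u) \<bullet> v = u \<bullet> (h *v v)" for u v by (rule inner_mat_sym[OF I(3)])
  have hgx: "(h *v u) \<bullet> (g *v v) = u \<bullet> v" for u v by (simp add: sh hg)
  have ghx: "(g *v u) \<bullet> (h *v v) = u \<bullet> v" for u v by (simp add: sg gh)
  have Spos: "S > 0" unfolding S_def nrm_def using assms(2) by simp
  have S2: "y \<bullet> (g *v y) + p \<bullet> (h *v p) = S * S"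
    using assms(2) unfolding S_def nrm_def Fsq_def Ksq_def h_def by simp
  obtain a b where X: "X = (a, b)" by fastforce
  obtain a' b' where Y: "Y = (a', b')" by fastforce
  have wX: "(g *v y) \<bullet> a + (h *v p) \<bullet> b = 0"
    using assms(3) Spos unfolding X V_xi2_def omega2_def S_def[symmetric] h_def[symmetric] by simp
  have wY: "(g *v y) \<bullet> a' + (h *v p) \<bullet> b' = 0"
    using assms(4) Spos unfolding Y V_xi2_def omega2_def S_def[symmetric] h_def[symmetric] by simp
  define \<alpha> where "\<alpha> = (p \<bullet> a - y \<bullet> b) / S"
  define \<beta> where "\<beta> = (p \<bullet> a' - y \<bullet> b') / S"
  have fX: "fv g y p X = (h *v b + (\<alpha> / S) *\<^sub>R y, - (g *v a) + (\<alpha> / S) *\<^sub>R p)"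
    using wX unfolding fv_def X phiv_def xi1_def xi2_def omega1_def omega2_def
      S_def[symmetric] h_def[symmetric] \<alpha>_def by simp
  have fY: "fv g y p Y = (h *v b' + (\<beta> / S) *\<^sub>R y, - (g *v a') + (\<beta> / S) *\<^sub>R p)"
    using wY unfolding fv_def Y phiv_def xi1_def xi2_def omega1_def omega2_def
      S_def[symmetric] h_def[symmetric] \<beta>_def by simp
  have o1X: "omega1 g y p X = \<alpha>" unfolding omega1_def X \<alpha>_def S_def by simp
  have o1Y: "omega1 g y p Y = \<beta>" unfolding omega1_def Y \<beta>_def S_def by simp
  show ?thesis
  proof
    show "fv g y p X \<in> V_xi2 g y p"
    proof -
      have e1: "(h *v p) \<bullet> (g *v a) = p \<bullet> a" by (metis ghx inner_commute)
      have "(g *v y) \<bullet> (h *v b + (\<alpha> / S) *\<^sub>R y) + (h *v p) \<bullet> (- (g *v a) + (\<alpha> / S) *\<^sub>R p)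
          = y \<bullet> b - p \<bullet> a + (\<alpha> / S) * (y \<bullet> (g *v y) + p \<bullet> (h *v p))"
        by (simp add: inner_add_right inner_minus_right ghx e1 sg sh gh hg algebra_simps)
      also have "\<dots> = 0" using S2 Spos unfolding \<alpha>_def by (simp add: field_simps)
      finally show ?thesis
        unfolding V_xi2_def omega2_def fX h_def[symmetric] S_def[symmetric] by simp
    qed
    show "Gv g (fv g y p X) (fv g y p Y) = Gv g X Y - omega1 g y p X * omega1 g y p Y"
    proof -
      have e1: "(h *v p) \<bullet> (g *v a) = p \<bullet> a" "(h *v p) \<bullet> (g *v a') = p \<bullet> a'"
        "(h *v b) \<bullet> (g *v y) = b \<bullet> y" "(h *v b') \<bullet> (g *v y) = b' \<bullet> y"
        by (metis hgx ghx inner_commute)+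
      have e2: "(h *v b) \<bullet> (g *v (h *v b')) = b \<bullet> (h *v b')" by (rule hgx)
      have e3: "(g *v a) \<bullet> (h *v (g *v a')) = a \<bullet> (g *v a')" by (rule ghx)
      have "(h *v b + (\<alpha> / S) *\<^sub>R y) \<bullet> (g *v (h *v b' + (\<beta> / S) *\<^sub>R y))
           + (- (g *v a) + (\<alpha> / S) *\<^sub>R p) \<bullet> (h *v (- (g *v a') + (\<beta> / S) *\<^sub>R p))
         = b \<bullet> (h *v b') + a \<bullet> (g *v a') + (\<alpha> / S) * (y \<bullet> b' - p \<bullet> a')
           + (\<beta> / S) * (b \<bullet> y - a \<bullet> p) + (\<alpha> / S) * (\<beta> / S) * (y \<bullet> (g *v y) + p \<bullet> (h *v p))"
        unfolding matrix_vector_right_distrib matrix_vector_mult_scaleR mvm_minus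
        apply (simp only: inner_add_left inner_add_right inner_scaleR_left inner_scaleR_right
           inner_minus_left inner_minus_right e2 e3 gh hg)
        using e1 by (simp add: inner_commute algebra_simps)
          (metis inner_commute sg sh)
      also have "\<dots> = b \<bullet> (h *v b') + a \<bullet> (g *v a') - \<alpha> * \<beta>"
        using S2 Spos unfolding \<alpha>_def \<beta>_def by (simp add: field_simps inner_commute)
      finally have fin: "Gv g (fv g y p X) (fv g y p Y) = b \<bullet> (h *v b') + a \<bullet> (g *v a') - \<alpha> * \<beta>"
        unfolding Gv_def fX fY h_def[symmetric] by simp
      have "Gv g X Y = a \<bullet> (g *v a') + b \<bullet> (h *v b')" unfolding Gv_def X Y h_def by simp
      thus ?thesis using fin o1X o1Y by simp
    qed
  qed
qed

end
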